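(* Let $\mathcal A\subset\mathbb R^d$ be finite and nonempty with $\mathcal D=\mathrm{conv}(\mathcal A)=\{x:Bx\le c\}$. Let $f(x)=g(Ax)+\langle b,x\rangle$ with $A\in\mathbb R^{m\times d}$, $b\in\mathbb R^d$, where $g$ is continuously differentiable on an open set containing $A\mathcal D$ and $\mu_g$-strongly convex on $A\mathcal D$ with $\mu_g>0$, and let $\tilde\mu$ be the constant $\tilde\mu:=1/\big(2\theta^2(\|b\|M+3GM_A+\frac{2}{\mu_g}(G^2+1))\big)$ defined in the context. Then $\tilde\mu_f\ge\tilde\mu\cdot\mathrm{PWidth}(\mathcal A)^2$.
   Context: Euclidean norms. $\mathcal X^*:=\arg\min_{\mathcal D}f$; $G:=\max_{x\in\mathcal D}\|\nabla g(Ax)\|$, $M:=\mathrm{diam}(\mathcal D)$, $M_A:=\mathrm{diam}(A\mathcal D)$; $\theta>0$ is a Hoffman constant: for every $t\in\mathbb R^m,s\in\mathbb R$ with $P_{t,s}:=\{y:Ay=t,\langle b,y\rangle=s,By\le c\}\ne\emptyset$ and every $x$ with $Bx\le c$, $d(x,P_{t,s})\le\theta\|(Ax-t,\langle b,x\rangle-s)\|$. For a finite $\mathcal B$ and $x\in\mathrm{conv}(\mathcal B)$, $\mathcal S_x(\mathcal B)$ is the family of subsets $S\subseteq\mathcal B$ such that $x$ is a proper convex combination of all elements of $S$ (all coefficients positive); $\mathcal S_x=\mathcal S_x(\mathcal A)$. For $r\neq0$, $\mathrm{PdirW}(\mathcal B,r,x):=\min_{S\in\mathcal S_x(\mathcal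 B)}\max_{s\in\mathcal B,v\in S}\langle r/\|r\|,s-v\rangle$; $\mathrm{PWidth}(\mathcal A):=\inf\{\mathrm{PdirW}(\mathcal K\cap\mathcal A,r,x)\}$ over nonempty faces $\mathcal K$ of $\mathcal D$ (including $\mathcal D$), $x\in\mathcal K$, $r\in\mathrm{cone}(\mathcal K-x)\setminus\{0\}$. For $x\in\mathcal D$: $s_f(x)\in\arg\min_{a\in\mathcal A}\langle\nabla f(x),a\rangle$; for $S\in\mathcal S_x$, $v_S(x)\in\arg\max_{v\in S}\langle\nabla f(x),v\rangle$; $v_f(x)$ is an element of $\{v_S(x):S\in\mathcal S_x\}$ minimizing $\langle\nabla f(x),\cdot\rangle$; for $\langle\nabla f(x),x^*-x\rangle<0$, $\gamma^{A}(x,x^* ):=\frac{\langle-\nabla f(x),x^*-x\rangle}{\langle-\nabla f(x),s_f(x)-v_f(x)\rangle}$. Generalized geometric strong convexity constant: $\tilde\mu_f:=\inf_{x\in\mathcal D\setminus\mathcal X^*}\ \sup_{x^*\in\mathcal X^*:\langle\nabla f(x),x^*-x\rangle<0}\frac{1}{2\gamma^{A}(x,x^* )^2}\big(f(x^* )-f(x)-2\langle\nabla f(x),x^*-x\rangle\big)$. *)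

theory Defs
  imports "HOL-Analysis.Analysis"
begin

definition strongly_convex_on_with :: "real \<Rightarrow> 'a::real_normed_vector set \<Rightarrow> ('a \<Rightarrow> real) \<Rightarrow> bool" where
  "strongly_convex_on_with \<mu> C g \<longleftrightarrow>
     (\<forall>x\<in>C. \<forall>y\<in>C. \<forall>t::real. 0 \<le> t \<and> t \<le> 1 \<longrightarrow>
        g ((1 - t) *\<^sub>R x + t *\<^sub>R y) \<le> (1 - t) * g x + t * g y - \<mu> / 2 * t * (1 - t) * (norm (x - y))\<^sup>2)"

definition Sx :: "'a::real_vector set \<Rightarrow> 'a \<Rightarrow> 'a set set" where
  "Sx B x = {S. S \<subseteq> B \<and> finite S \<and>
      (\<exists>w. (\<forall>v\<in>S. 0 < w v) \<and> sum w S = 1 \<and> (\<Sum>v\<in>S. w v *\<^sub>R v) = x)}"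

definition PdirW :: "'a::real_inner set \<Rightarrow> 'a \<Rightarrow> 'a \<Rightarrow> real" where
  "PdirW B r x = Min {Max {inner (r /\<^sub>R norm r) (s - v) | s v. s \<in> B \<and> v \<in> S} | S. S \<in> Sx B x}"

text \<open>PWidth(A), with D = conv(A); infimum taken in the extended reals (inf of empty set = +infinity).\<close>
definition PWidth :: "'a::euclidean_space set \<Rightarrow> ereal" where
  "PWidth A = Inf {ereal (PdirW (K \<inter> A) r x) | K x r.
       K face_of (convex hull A) \<and> K \<noteq> {} \<and> x \<in> K \<and>
       r \<in> (cone hull ((\<lambda>y. y - x) ` K)) - {0}}"

definition Xstar :: "('a \<Rightarrow> real) \<Rightarrow> 'a set \<Rightarrow> 'a set" where
  "Xstar f D = {x \<in> D. \<forall>y\<in>D. f x \<le> f y}"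

text \<open>Frank-Wolfe vertex s_f(x), away vertices v_S(x), v_f(x); gf is the gradient of f.\<close>
definition s_f :: "'a::real_inner set \<Rightarrow> ('a \<Rightarrow> 'a) \<Rightarrow> 'a \<Rightarrow> 'a" where
  "s_f A gf x = arg_min_on (\<lambda>a. inner (gf x) a) A"

definition v_S :: "('a::real_inner \<Rightarrow> 'a) \<Rightarrow> 'a \<Rightarrow> 'a set \<Rightarrow> 'a" where
  "v_S gf x S = (ARG_MAX (\<lambda>v. inner (gf x) v) v. v \<in> S)"

definition v_f :: "'a::real_inner set \<Rightarrow> ('a \<Rightarrow> 'a) \<Rightarrow> 'a \<Rightarrow> 'a" where
  "v_f A gf x = arg_min_on (\<lambda>v. inner (gf x) v) (v_S gf x ` Sx A x)"

definition gammaA :: "'a::real_inner set \<Rightarrow> ('a \<Rightarrow> 'a) \<Rightarrow> 'a \<Rightarrow> 'a \<Rightarrow> real" where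
  "gammaA A gf x xs = inner (- gf x) (xs - x) / inner (- gf x) (s_f A gf x - v_f A gf x)"

definition mu_tilde_f :: "'a::euclidean_space set \<Rightarrow> ('a \<Rightarrow> real) \<Rightarrow> ('a \<Rightarrow> 'a) \<Rightarrow> ereal" where
  "mu_tilde_f A f gf =
     (INF x \<in> convex hull A - Xstar f (convex hull A).
        SUP xs \<in> {xs \<in> Xstar f (convex hull A). inner (gf x) (xs - x) < 0}.
          ereal (1 / (2 * (gammaA A gf x xs)\<^sup>2) * (f xs - f x - 2 * inner (gf x) (xs - x))))"

end

theory Submission
  imports Defs
begin

lemma Sx_elem:
  assumes "S \<in> Sx B x"
  shows "S \<noteq> {}" "S \<subseteq> B" "finite S"
  using assms unfolding Sx_def by auto

lemma Sx_finite: "finite B \<Longrightarrow> finite (Sx B x)"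
  by (rule finite_subset[of _ "Pow B"]) (auto simp: Sx_def)

lemma Sx_nonempty:
  fixes B :: "'a::real_vector set"
  assumes "finite B" "x \<in> convex hull B"
  shows "Sx B x \<noteq> {}"
proof -
  obtain u where u: "\<forall>y\<in>B. 0 \<le> u y" "sum u B = 1" "(\<Sum>y\<in>B. u y *\<^sub>R y) = x"
    using assms convex_hull_finite[OF assms(1)] by auto
  define S where "S = {y\<in>B. u y > 0}"
  have fS: "finite S" using assms(1) S_def by auto
  have "sum u S = sum u B"
    by (rule sum.mono_neutral_left) (use assms(1) u(1) in \<open>auto simp: S_def\<close>)
  moreover have "(\<Sum>y\<in>S. u y *\<^sub>R y) = (\<Sum>y\<in>B. u y *\<^sub>R y)"
    by (rule sum.mono_neutral_left) (use assms(1) u(1) in \<open>auto simp: S_def\<close>)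
  ultimately have "S \<in> Sx B x" using u fS unfolding Sx_def S_def by auto
  then show ?thesis by auto
qed

lemma Max_set_finite:
  fixes B S :: "'a::real_inner set"
  assumes "finite B" "finite S"
  shows "finite {inner r (s - v) | s v. s \<in> B \<and> v \<in> S}"
proof -
  have "{inner r (s - v) | s v. s \<in> B \<and> v \<in> S} = (\<lambda>(s,v). inner r (s - v)) ` (B \<times> S)" by auto
  then show ?thesis using assms by simp
qed

lemma PdirW_le:
  fixes B :: "'a::real_inner set"
  assumes "finite B" "S \<in> Sx B x"
  shows "\<exists>s\<in>B. \<exists>v\<in>S. PdirW B r x \<le> inner (r /\<^sub>R norm r) (s - v)"
proof -
  have S: "S \<noteq> {}" "S \<subseteq> B" "finite S" using Sx_elem[OF assms(2)] by auto
  let ?M = "\<lambda>S. Max {inner (r /\<^sub>R norm r) (s - v) | s v. s \<in> B \<and> v \<in> S}"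
  have fin: "finite {?M S | S. S \<in> Sx B x}" using Sx_finite[OF assms(1)] by simp
  have "PdirW B r x \<le> ?M S" unfolding PdirW_def
    by (rule Min_le[OF fin]) (use assms(2) in auto)
  moreover have "?M S \<in> {inner (r /\<^sub>R norm r) (s - v) | s v. s \<in> B \<and> v \<in> S}"
    by (rule Max_in[OF Max_set_finite[OF assms(1) S(3)]]) (use S in auto)
  then obtain s v where sv: "s \<in> B" "v \<in> S" "?M S = inner (r /\<^sub>R norm r) (s - v)" by blast
  show ?thesis using sv \<open>PdirW B r x \<le> ?M S\<close> by metis
qed

lemma PdirW_nonneg:
  fixes B :: "'a::real_inner set"
  assumes "finite B" "Sx B x \<noteq> {}"
  shows "PdirW B r x \<ge> 0"
proof -
  let ?M = "\<lambda>S. Max {inner (r /\<^sub>R norm r) (s - v) | s v. s \<in> B \<and> v \<in> S}"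
  have fin: "finite {?M S | S. S \<in> Sx B x}" using Sx_finite[OF assms(1)] by simp
  have "0 \<le> ?M S" if "S \<in> Sx B x" for S
  proof -
    have S: "S \<noteq> {}" "S \<subseteq> B" "finite S" using Sx_elem[OF that] by auto
    then obtain v where v: "v \<in> S" by auto
    have "0 \<in> {inner (r /\<^sub>R norm r) (s - v) | s v. s \<in> B \<and> v \<in> S}"
      using v S by force
    then show ?thesis by (rule Max_ge[OF Max_set_finite[OF assms(1) S(3)]])
  qed
  then show ?thesis unfolding PdirW_def
    using fin assms(2) by (subst Min_ge_iff) auto
qed

lemma PWidth_nonneg:
  fixes A :: "'a::euclidean_space set"
  assumes "finite A"
  shows "PWidth A \<ge> 0"
  unfolding PWidth_def
proof (rule Inf_greatest)
  fix z assume "z \<in> {ereal (PdirW (K \<inter> A) r x) | K x r.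
       K face_of (convex hull A) \<and> K \<noteq> {} \<and> x \<in> K \<and>
       r \<in> (cone hull ((\<lambda>y. y - x) ` K)) - {0}}"
  then obtain K x r where K: "K face_of convex hull A" "K \<noteq> {}" "x \<in> K"
    and z: "z = ereal (PdirW (K \<inter> A) r x)" by blast
  obtain S' where S': "S' \<subseteq> A" "K = convex hull S'"
    using face_of_convex_hull_subset[OF finite_imp_compact[OF assms] K(1)] by blast
  have "S' \<subseteq> K \<inter> A" using S' hull_subset[of S' convex] by auto
  then have "convex hull S' \<subseteq> convex hull (K \<inter> A)" by (rule hull_mono)
  then have "x \<in> convex hull (K \<inter> A)" using K(3) S'(2) by auto
  then have "Sx (K \<inter> A) x \<noteq> {}" using Sx_nonempty[of "K \<inter> A" x] assms by auto
  then show "0 \<le> z" unfolding z using PdirW_nonneg[of "K \<inter> A" x r] assms by auto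
qed


lemma key_pw:
  fixes A :: "'a::euclidean_space set"
  assumes finA: "finite A" and x: "x \<in> convex hull A" and S0: "S0 \<in> Sx A x"
    and y: "y \<in> convex hull A" and pos: "inner r (y - x) > 0"
  obtains q s v where "PWidth A \<le> ereal q" "s \<in> A" "v \<in> S0"
     "q * inner r (y - x) \<le> norm (y - x) * inner r (s - v)"
proof -
  define C where "C = convex_cone hull ((\<lambda>a. a - x) ` A)"
  have clC: "closed C" unfolding C_def by (rule closed_convex_cone_hull) (use finA in auto)
  have ccC: "convex_cone C" unfolding C_def by (rule convex_cone_convex_cone_hull)
  then have cvxC: "convex C" and conC: "conic C" unfolding convex_cone_def by auto
  have trans: "convex hull ((\<lambda>a. a - x) ` A) = (\<lambda>a. a - x) ` (convex hull A)"
  proof -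
    have e: "(\<lambda>a. a - x) = (\<lambda>a. (- x) + a)" by auto
    show ?thesis unfolding e by (rule convex_hull_translation)
  qed
  have Cmem: "z - x \<in> C" if "z \<in> convex hull A" for z
  proof -
    have hz: "z - x \<in> convex hull ((\<lambda>a. a - x) ` A)" unfolding trans using that by auto
    have "(z - x) \<in> (\<Union>c\<in>{0..}. {c *\<^sub>R (z - x)})" by (rule UN_I[of 1]) auto
    then show ?thesis unfolding C_def convex_cone_hull_convex_hull using hz by blast
  qed
  have Cdesc: "\<exists>c w. c \<ge> 0 \<and> w \<in> convex hull A \<and> z = c *\<^sub>R (w - x)" if "z \<in> C" "z \<noteq> 0" for z
  proof -
    from that have "z \<in> (\<Union>w\<in>(\<lambda>a. a - x) ` (convex hull A). \<Union>c\<in>{0..}. {c *\<^sub>R w})"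
      unfolding C_def convex_cone_hull_convex_hull trans by simp
    then show ?thesis by force
  qed
  have C0: "0 \<in> C" unfolding C_def by (rule convex_cone_hull_contains_0)
  define p where "p = closest_point C r"
  have pC: "p \<in> C" unfolding p_def using closest_point_in_set[OF clC] C0 by auto
  have pmin: "\<forall>z\<in>C. dist r p \<le> dist r z" unfolding p_def using closest_point_exists(2)[OF clC] C0 by auto
  have dot: "inner (r - p) (z - p) \<le> 0" if "z \<in> C" for z
    by (rule any_closest_point_dot[OF cvxC clC pC that pmin])
  define n where "n = r - p"
  have p2: "2 *\<^sub>R p \<in> C" using conC pC unfolding conic_def by auto
  have "inner n (0 - p) \<le> 0" using dot[OF C0] n_def by simp
  moreover have "inner n (2 *\<^sub>R p - p) \<le> 0" using dot[OF p2] n_def by simp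
  ultimately have np: "inner n p = 0" by (simp add: inner_diff_right algebra_simps)
  have nC: "inner n z \<le> 0" if "z \<in> C" for z
    using dot[OF that] np unfolding n_def[symmetric] by (simp add: inner_diff_right)
  have nD: "inner n w \<le> inner n x" if "w \<in> convex hull A" for w
    using nC[OF Cmem[OF that]] by (simp add: inner_diff_right)
  have rnp: "r = p + n" unfolding n_def by simp
  have rle: "inner r (y - x) \<le> inner p (y - x)"
    using nC[OF Cmem[OF y]] unfolding rnp by (simp add: inner_add_left)
  then have "p \<noteq> 0" using pos by auto
  then obtain c w where cw: "c \<ge> 0" "w \<in> convex hull A" "p = c *\<^sub>R (w - x)"
    using Cdesc[OF pC] by blast
  have "c \<noteq> 0" using cw \<open>p \<noteq> 0\<close> by auto
  have "c * inner n (w - x) = 0" using np cw(3) by simp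
  then have nw: "inner n w = inner n x" using \<open>c \<noteq> 0\<close> by (simp add: inner_diff_right)
  define F where "F = convex hull A \<inter> {z. inner n z = inner n x}"
  have Fface: "F face_of convex hull A" unfolding F_def
    by (rule face_of_Int_supporting_hyperplane_le) (use nD in auto)
  have xF: "x \<in> F" and wF: "w \<in> F" using x cw(2) nw by (auto simp: F_def)
  have pcone: "p \<in> cone hull ((\<lambda>z. z - x) ` F) - {0}"
  proof -
    have "w - x \<in> (\<lambda>z. z - x) ` F" using wF by blast
    then show ?thesis unfolding cone_hull_expl using cw(1,3) \<open>p \<noteq> 0\<close> by blast
  qed
  have PW: "PWidth A \<le> ereal (PdirW (F \<inter> A) p x)"
    unfolding PWidth_def by (rule Inf_lower) (use Fface xF pcone in blast)
  obtain wt where wt: "\<forall>v\<in>S0. 0 < wt v" "sum wt S0 = 1" "(\<Sum>v\<in>S0. wt v *\<^sub>R v) = x"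
    using S0 unfolding Sx_def by auto
  have S0s: "S0 \<subseteq> A" "finite S0" using Sx_elem[OF S0] by auto
  have S0D: "v \<in> convex hull A" if "v \<in> S0" for v using S0s(1) that hull_subset[of A convex] by blast
  have "(\<Sum>v\<in>S0. wt v * (inner n x - inner n v)) = (\<Sum>v\<in>S0. wt v) * inner n x - inner n (\<Sum>v\<in>S0. wt v *\<^sub>R v)"
    by (simp add: algebra_simps sum_subtractf sum_distrib_right inner_sum_right)
  also have "\<dots> = 0" using wt by simp
  finally have sum0: "(\<Sum>v\<in>S0. wt v * (inner n x - inner n v)) = 0" .
  have nn: "\<forall>v\<in>S0. 0 \<le> wt v * (inner n x - inner n v)"
  proof
    fix v assume "v \<in> S0"
    then have "0 \<le> wt v" "0 \<le> inner n x - inner n v" using nD S0D wt(1) by (auto simp: less_imp_le)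
    then show "0 \<le> wt v * (inner n x - inner n v)" by simp
  qed
  have "(\<Sum>v\<in>S0. wt v * (inner n x - inner n v)) = 0 \<longleftrightarrow> (\<forall>v\<in>S0. wt v * (inner n x - inner n v) = 0)"
    by (rule sum_nonneg_eq_0_iff[OF S0s(2)]) (use nn in auto)
  then have "\<forall>v\<in>S0. wt v * (inner n x - inner n v) = 0" using sum0 by blast
  note z0 = this
  have S0F: "v \<in> F" if "v \<in> S0" for v
  proof -
    have "wt v * (inner n x - inner n v) = 0" "wt v > 0" using z0 wt(1) that by auto
    then have "inner n v = inner n x" by simp
    then show ?thesis using S0D[OF that] by (simp add: F_def)
  qed
  have S0FA: "S0 \<subseteq> F \<inter> A" using S0F S0s by auto
  have S0F': "S0 \<in> Sx (F \<inter> A) x" unfolding Sx_def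
    by (intro CollectI conjI exI[of _ wt] S0FA S0s(2) wt(2) wt(3)) (use wt(1) in auto)
  have finFA: "finite (F \<inter> A)" using finA by auto
  obtain s v where sv: "s \<in> F \<inter> A" "v \<in> S0" "PdirW (F \<inter> A) p x \<le> inner (p /\<^sub>R norm p) (s - v)"
    using PdirW_le[OF finFA S0F'] by blast
  define q where "q = PdirW (F \<inter> A) p x"
  have q0: "q \<ge> 0" unfolding q_def by (rule PdirW_nonneg[OF finFA]) (use S0F' in auto)
  have "inner n (s - v) = 0" using sv S0F by (auto simp: F_def inner_diff_right)
  then have rsv: "inner r (s - v) = inner p (s - v)" unfolding rnp by (simp add: inner_add_left)
  have np0: "norm p > 0" using \<open>p \<noteq> 0\<close> by simp
  have qp: "q * norm p \<le> inner p (s - v)"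
    using sv(3) np0 unfolding q_def by (simp add: field_simps)
  have "q * inner r (y - x) \<le> q * (norm p * norm (y - x))"
    using rle norm_cauchy_schwarz[of p "y - x"] q0 by (intro mult_left_mono) auto
  also have "\<dots> = (q * norm p) * norm (y - x)" by simp
  also have "\<dots> \<le> inner p (s - v) * norm (y - x)" using qp by (intro mult_right_mono) auto
  finally have "q * inner r (y - x) \<le> norm (y - x) * inner r (s - v)" using rsv by (simp add: mult.commute)
  moreover have "PWidth A \<le> ereal q" using PW q_def by simp
  moreover have "s \<in> A" using sv(1) by simp
  ultimately show ?thesis using that sv(2) by metis
qed


lemma sc_grad:
  fixes g :: "'a::real_inner \<Rightarrow> real"
  assumes sc: "strongly_convex_on_with \<mu> C g" and u: "u \<in> C" and v: "v \<in> C"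
    and gd: "(g has_derivative (\<lambda>h. inner h D)) (at u)"
  shows "g u + inner D (v - u) + \<mu> / 2 * (norm (v - u))\<^sup>2 \<le> g v"
proof -
  define \<phi> where "\<phi> t = g (u + t *\<^sub>R (v - u))" for t :: real
  have l: "((\<lambda>t::real. u + t *\<^sub>R (v - u)) has_derivative (\<lambda>t. t *\<^sub>R (v - u))) (at 0)"
    by (auto intro!: derivative_eq_intros)
  have gd': "(g has_derivative (\<lambda>h. inner h D)) (at ((\<lambda>t::real. u + t *\<^sub>R (v - u)) 0))"
    using gd by simp
  have "((g \<circ> (\<lambda>t::real. u + t *\<^sub>R (v - u))) has_derivative ((\<lambda>h. inner h D) \<circ> (\<lambda>t. t *\<^sub>R (v - u)))) (at 0)"
    by (rule diff_chain_at[OF l gd'])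
  moreover have "(\<lambda>h. inner h D) \<circ> (\<lambda>t. t *\<^sub>R (v - u)) = (*) (inner (v - u) D)"
    by (auto simp: fun_eq_iff inner_commute)
  ultimately have "(\<phi> has_field_derivative (inner (v - u) D)) (at 0)"
    unfolding has_field_derivative_def \<phi>_def by (simp add: comp_def)
  then have lim: "((\<lambda>h. (\<phi> (0 + h) - \<phi> 0) / h) \<longlongrightarrow> inner (v - u) D) (at 0)"
    by (rule DERIV_D)
  then have lim': "((\<lambda>h. (\<phi> h - \<phi> 0) / h) \<longlongrightarrow> inner (v - u) D) (at_right 0)"
    using filterlim_at_split by force
  define N where "N = (norm (v - u))\<^sup>2"
  have lim2: "((\<lambda>h::real. g v - g u - \<mu> / 2 * (1 - h) * N) \<longlongrightarrow> g v - g u - \<mu> / 2 * (1 - 0) * N) (at_right 0)"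
    by (intro tendsto_intros)
  have ev: "eventually (\<lambda>h. (\<phi> h - \<phi> 0) / h \<le> g v - g u - \<mu> / 2 * (1 - h) * N) (at_right 0)"
  proof -
    have "eventually (\<lambda>h. h \<in> {0<..<1}) (at_right (0::real))" by (rule eventually_at_right_real) simp
    then show ?thesis
    proof eventually_elim
      case (elim t)
      then have t: "0 < t" "t < 1" by auto
      have "g ((1 - t) *\<^sub>R u + t *\<^sub>R v) \<le> (1 - t) * g u + t * g v - \<mu> / 2 * t * (1 - t) * (norm (u - v))\<^sup>2"
        using sc u v t unfolding strongly_convex_on_with_def by auto
      moreover have "(1 - t) *\<^sub>R u + t *\<^sub>R v = u + t *\<^sub>R (v - u)" by (simp add: algebra_simps)
      moreover have "norm (u - v) = norm (v - u)" by (rule norm_minus_commute)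
      ultimately have "\<phi> t - \<phi> 0 \<le> t * (g v - g u - \<mu> / 2 * (1 - t) * N)"
        unfolding \<phi>_def N_def by (simp add: algebra_simps)
      then show ?case using t by (simp add: divide_simps mult.commute)
    qed
  qed
  have "inner (v - u) D \<le> g v - g u - \<mu> / 2 * (1 - 0) * N"
    by (rule tendsto_le[OF _ lim2 lim' ev]) simp
  then show ?thesis unfolding N_def by (simp add: inner_commute)
qed

lemma core_ineq:
  fixes u beta Delta G nb M MA mu :: real
  assumes "\<bar>beta\<bar> \<le> Delta + G * u" "Delta \<le> nb + G * MA" "u \<le> MA" "0 \<le> u" "0 < Delta"
    "0 \<le> G" "0 < mu" "0 \<le> nb"
  shows "u\<^sup>2 + beta\<^sup>2 \<le> (nb + 3 * G * MA + 2 / mu * (G\<^sup>2 + 1)) * (Delta + mu * u\<^sup>2)"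
proof -
  have "beta\<^sup>2 = \<bar>beta\<bar>\<^sup>2" by simp
  also have "\<dots> \<le> (Delta + G * u)\<^sup>2" using assms by (intro power_mono) auto
  also have "\<dots> = Delta * Delta + 2 * G * Delta * u + G\<^sup>2 * u\<^sup>2" by (simp add: power2_eq_square algebra_simps)
  finally have b: "beta\<^sup>2 \<le> Delta * Delta + 2 * G * Delta * u + G\<^sup>2 * u\<^sup>2" .
  have d1: "Delta * Delta \<le> Delta * (nb + G * MA)" using assms by (intro mult_left_mono) auto
  have d2: "2 * G * Delta * u \<le> 2 * G * Delta * MA" using assms by (intro mult_left_mono) auto
  have e1: "(nb + 3 * G * MA) * Delta \<le> (nb + 3 * G * MA + 2 / mu * (G\<^sup>2 + 1)) * Delta"
    using assms by (intro mult_right_mono) auto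
  have e2: "2 * (G\<^sup>2 + 1) * u\<^sup>2 \<le> (nb + 3 * G * MA + 2 / mu * (G\<^sup>2 + 1)) * mu * u\<^sup>2"
  proof -
    have "0 \<le> u" "0 \<le> MA" using assms by auto
    then have "2 * (G\<^sup>2 + 1) \<le> (nb + 3 * G * MA + 2 / mu * (G\<^sup>2 + 1)) * mu"
      using assms by (simp add: algebra_simps)
    then show ?thesis by (intro mult_right_mono) auto
  qed
  have eq: "(nb + 3 * G * MA) * Delta + 2 * (G\<^sup>2 + 1) * u\<^sup>2 = Delta * (nb + G * MA) + 2 * G * Delta * MA + G\<^sup>2 * u\<^sup>2 + u\<^sup>2 + (G\<^sup>2 * u\<^sup>2 + u\<^sup>2)"
    by (simp add: algebra_simps power2_eq_square)
  have nn: "0 \<le> G\<^sup>2 * u\<^sup>2 + u\<^sup>2" by simp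
  have "u\<^sup>2 + beta\<^sup>2 \<le> (nb + 3 * G * MA) * Delta + 2 * (G\<^sup>2 + 1) * u\<^sup>2"
    unfolding eq using b d1 d2 nn by linarith
  also have "\<dots> \<le> (nb + 3 * G * MA + 2 / mu * (G\<^sup>2 + 1)) * Delta + (nb + 3 * G * MA + 2 / mu * (G\<^sup>2 + 1)) * mu * u\<^sup>2"
    using e1 e2 by linarith
  also have "\<dots> = (nb + 3 * G * MA + 2 / mu * (G\<^sup>2 + 1)) * (Delta + mu * u\<^sup>2)" by (simp add: distrib_left distrib_right mult.assoc)
  finally show ?thesis .
qed

lemma arg_max_fin:
  fixes f :: "'a \<Rightarrow> real"
  assumes "finite S" "S \<noteq> {}"
  shows "(ARG_MAX f v. v \<in> S) \<in> S \<and> (\<forall>y\<in>S. f y \<le> f (ARG_MAX f v. v \<in> S))"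
proof -
  have "Max (f ` S) \<in> f ` S" using assms by auto
  then obtain m where m: "m \<in> S" "f m = Max (f ` S)" by auto
  have mm: "\<forall>y\<in>S. f y \<le> f m" using m assms by auto
  show ?thesis
    by (rule arg_maxI[where P = "\<lambda>v. v \<in> S" and x = m]) (use m mm in \<open>auto simp: not_less\<close>)
qed

theorem mainTheorem11:
  fixes Aset :: "(real^'d) set"
    and B :: "real^'d^'k" and c :: "real^'k"
    and A :: "real^'d^'m" and b :: "real^'d"
    and g :: "real^'m \<Rightarrow> real" and dg :: "real^'m \<Rightarrow> real^'m"
    and U :: "(real^'m) set"
    and \<mu>g \<theta> :: real
  assumes finA: "finite Aset" and neA: "Aset \<noteq> {}"
    and D_eq: "convex hull Aset = {x. \<forall>i. (B *v x) $ i \<le> c $ i}"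
    and U_open: "open U" and U_sup: "(\<lambda>x. A *v x) ` (convex hull Aset) \<subseteq> U"
    and g_grad: "\<And>y. y \<in> U \<Longrightarrow> GDERIV g y :> dg y"
    and dg_cont: "continuous_on U dg"
    and mug_pos: "\<mu>g > 0"
    and g_sc: "strongly_convex_on_with \<mu>g ((\<lambda>x. A *v x) ` (convex hull Aset)) g"
    and theta_pos: "\<theta> > 0"
    and hoffman: "\<And>t s x. {y. A *v y = t \<and> inner b y = s \<and> (\<forall>i. (B *v y) $ i \<le> c $ i)} \<noteq> {}
        \<Longrightarrow> (\<forall>i. (B *v x) $ i \<le> c $ i)
        \<Longrightarrow> infdist x {y. A *v y = t \<and> inner b y = s \<and> (\<forall>i. (B *v y) $ i \<le> c $ i)}
              \<le> \<theta> * norm (A *v x - t, inner b x - s)"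
  shows
    "let D = convex hull Aset;
         f = (\<lambda>x. g (A *v x) + inner b x);
         gf = (\<lambda>x. transpose A *v dg (A *v x) + b);
         G = (SUP x\<in>D. norm (dg (A *v x)));
         M = diameter D;
         MA = diameter ((\<lambda>x. A *v x) ` D);
         mu = 1 / (2 * \<theta>\<^sup>2 * (norm b * M + 3 * G * MA + 2 / \<mu>g * (G\<^sup>2 + 1)))
     in mu_tilde_f Aset f gf \<ge> ereal mu * (PWidth Aset)\<^sup>2"
proof -
  define D where "D = convex hull Aset"
  define f where "f = (\<lambda>x. g (A *v x) + inner b x)"
  define gf where "gf = (\<lambda>x. transpose A *v dg (A *v x) + b)"
  define G where "G = (SUP x\<in>D. norm (dg (A *v x)))"
  define M where "M = diameter D"
  define MA where "MA = diameter ((\<lambda>x. A *v x) ` D)"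
  define Kc where "Kc = norm b * M + 3 * G * MA + 2 / \<mu>g * (G\<^sup>2 + 1)"
  define mu where "mu = 1 / (2 * \<theta>\<^sup>2 * Kc)"
  define AD where "AD = (\<lambda>x. A *v x) ` D"
  have cD: "convex D" by (simp add: D_def)
  have compD: "compact D" unfolding D_def by (rule compact_convex_hull[OF finite_imp_compact[OF finA]])
  have bD: "bounded D" using compD compact_imp_bounded by blast
  have DA: "Aset \<subseteq> D" unfolding D_def by (rule hull_subset)
  have Dne: "D \<noteq> {}" using neA DA by auto
  have linc: "continuous_on S (\<lambda>x. A *v x)" for S
    by (rule linear_continuous_on[OF matrix_vector_mul_bounded_linear])
  have compAD: "compact AD" unfolding AD_def by (rule compact_continuous_image[OF linc compD])
  have bAD: "bounded AD" using compAD compact_imp_bounded by blast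
  have ADU: "AD \<subseteq> U" using U_sup by (simp add: AD_def D_def)
  have ADm: "A *v x \<in> AD" if "x \<in> D" for x using that by (simp add: AD_def)
  have gder: "(g has_derivative (\<lambda>h. inner h (dg y))) (at y)" if "y \<in> U" for y
    using g_grad[OF that] by (simp add: gderiv_def)
  have gcont: "continuous_on U g"
    by (rule continuous_at_imp_continuous_on) (use gder has_derivative_continuous in blast)
  have fcont: "continuous_on D f" unfolding f_def
    by (intro continuous_on_add continuous_on_compose2[OF gcont linc] continuous_on_inner continuous_on_const continuous_on_id)
       (use ADU AD_def in auto)
  have ncont: "continuous_on D (\<lambda>z. norm (dg (A *v z)))"
    by (intro continuous_on_norm continuous_on_compose2[OF dg_cont linc]) (use ADU AD_def in auto)
  have bddG: "bdd_above ((\<lambda>z. norm (dg (A *v z))) ` D)"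
    by (rule bounded_imp_bdd_above[OF compact_imp_bounded[OF compact_continuous_image[OF ncont compD]]])
  have Gb: "norm (dg (A *v z)) \<le> G" if "z \<in> D" for z
    unfolding G_def by (rule cSUP_upper[OF that bddG])
  have G0: "0 \<le> G" using Dne Gb norm_ge_zero order_trans by blast
  have SC: "g u + inner (dg u) (v - u) + \<mu>g / 2 * (norm (v - u))\<^sup>2 \<le> g v" if "u \<in> AD" "v \<in> AD" for u v
  proof -
    have gsc': "strongly_convex_on_with \<mu>g AD g" using g_sc by (simp add: AD_def D_def)
    have "u \<in> U" using that ADU by auto
    show ?thesis by (rule sc_grad[OF gsc' that gder[OF \<open>u \<in> U\<close>]])
  qed
  have gradf: "f x + inner (gf x) (y - x) + \<mu>g / 2 * (norm (A *v y - A *v x))\<^sup>2 \<le> f y"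
    if "x \<in> D" "y \<in> D" for x y
  proof -
    have "inner (gf x) (y - x) = inner (dg (A *v x)) (A *v y - A *v x) + inner b (y - x)"
      unfolding gf_def by (simp add: inner_add_left dot_lmul_matrix matrix_vector_mult_diff_distrib)
    then show ?thesis using SC[OF ADm[OF that(1)] ADm[OF that(2)]] unfolding f_def
      by (simp add: inner_diff_right)
  qed
  have gbd: "g (A *v y) - g (A *v x) \<le> G * norm (A *v x - A *v y)" if "x \<in> D" "y \<in> D" for x y
  proof -
    have h: "g (A *v y) + inner (dg (A *v y)) (A *v x - A *v y) + \<mu>g / 2 * (norm (A *v x - A *v y))\<^sup>2 \<le> g (A *v x)"
      using SC[OF ADm[OF that(2)] ADm[OF that(1)]] .
    have "- inner (dg (A *v y)) (A *v x - A *v y) \<le> norm (dg (A *v y)) * norm (A *v x - A *v y)"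
      using Cauchy_Schwarz_ineq2[of "dg (A *v y)" "A *v x - A *v y"] by linarith
    also have "\<dots> \<le> G * norm (A *v x - A *v y)" using Gb[OF that(2)] by (intro mult_right_mono) auto
    finally show ?thesis using h mug_pos by (smt (verit) zero_le_power2 divide_pos_pos mult_nonneg_nonneg)
  qed
  obtain x0 where x0: "x0 \<in> D" "\<And>y. y \<in> D \<Longrightarrow> f x0 \<le> f y"
    using continuous_attains_inf[OF compD Dne fcont] by blast
  define tS where "tS = A *v x0"
  define sS where "sS = inner b x0"
  define P where "P = {y. A *v y = tS \<and> inner b y = sS \<and> (\<forall>i. (B *v y) $ i \<le> c $ i)}"
  have Dc: "y \<in> D \<longleftrightarrow> (\<forall>i. (B *v y) $ i \<le> c $ i)" for y using D_eq by (auto simp: D_def)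
  have scd: "\<And>p q t. p \<in> AD \<Longrightarrow> q \<in> AD \<Longrightarrow> 0 \<le> t \<Longrightarrow> t \<le> 1 \<Longrightarrow>
      g ((1 - t) *\<^sub>R p + t *\<^sub>R q) \<le> (1 - t) * g p + t * g q - \<mu>g / 2 * t * (1 - t) * (norm (p - q))\<^sup>2"
    using g_sc unfolding strongly_convex_on_with_def AD_def D_def by blast
  have XS: "Xstar f D = P"
  proof
    show "Xstar f D \<subseteq> P"
    proof
      fix y assume "y \<in> Xstar f D"
      then have y: "y \<in> D" "f y \<le> f x0" using x0 unfolding Xstar_def by auto
      then have fy: "f y = f x0" using x0(2) by force
      define m where "m = (1 - 1/2) *\<^sub>R x0 + (1/2::real) *\<^sub>R y"
      have mD: "m \<in> D" unfolding m_def using cD x0(1) y(1) by (intro convexD) auto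
      have Am: "A *v m = (1 - 1/2) *\<^sub>R (A *v x0) + (1/2::real) *\<^sub>R (A *v y)"
        unfolding m_def by (simp add: matrix_vector_right_distrib matrix_vector_mult_scaleR)
      have "g ((1 - 1/2) *\<^sub>R (A *v x0) + (1/2::real) *\<^sub>R (A *v y)) \<le> (1 - 1/2) * g (A *v x0) + 1/2 * g (A *v y)
          - \<mu>g / 2 * (1/2) * (1 - 1/2) * (norm (A *v x0 - A *v y))\<^sup>2"
        by (rule scd[OF ADm[OF x0(1)] ADm[OF y(1)]]) auto
      then have "f m \<le> (1/2) * f x0 + (1/2) * f y - \<mu>g / 8 * (norm (A *v x0 - A *v y))\<^sup>2"
        unfolding f_def Am[symmetric] m_def by (simp add: inner_add_right algebra_simps)
      then have "\<mu>g / 8 * (norm (A *v x0 - A *v y))\<^sup>2 \<le> 0" using x0(2)[OF mD] fy by linarith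
      then have "(norm (A *v x0 - A *v y))\<^sup>2 \<le> 0" using mug_pos
        by (simp add: mult_le_0_iff)
      then have Ay: "A *v y = tS" unfolding tS_def by simp
      then have "inner b y = sS" using fy unfolding f_def sS_def tS_def by simp
      then show "y \<in> P" using Ay y(1) Dc unfolding P_def by auto
    qed
    show "P \<subseteq> Xstar f D"
    proof
      fix y assume "y \<in> P"
      then have y: "A *v y = tS" "inner b y = sS" "y \<in> D" using Dc unfolding P_def by auto
      then have "f y = f x0" unfolding f_def tS_def sS_def by simp
      then show "y \<in> Xstar f D" using y(3) x0(2) unfolding Xstar_def by auto
    qed
  qed
  have Xeq: "Xstar f D = D \<inter> f -` {..f x0}" using x0 unfolding Xstar_def by force
  have clX: "closed (Xstar f D)" unfolding Xeq
    by (rule continuous_closed_preimage[OF fcont compact_imp_closed[OF compD] closed_atMost])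
  have x0X: "x0 \<in> Xstar f D" using x0 unfolding Xstar_def by auto
  have M0: "0 \<le> M" unfolding M_def by (simp add: diameter_ge_0 bD)
  have Kc0: "Kc > 0"
  proof -
    have "0 \<le> M" unfolding M_def by (simp add: diameter_ge_0 bD)
    moreover have "0 \<le> MA" unfolding MA_def by (simp add: diameter_ge_0 bAD[unfolded AD_def])
    moreover have "0 < 2 / \<mu>g * (G\<^sup>2 + 1)"
    proof -
      have "0 < G\<^sup>2 + 1" by (smt (verit) zero_le_power2)
      then show ?thesis using mug_pos by (intro mult_pos_pos divide_pos_pos) auto
    qed
    ultimately show ?thesis unfolding Kc_def using G0 by (simp add: add_nonneg_pos)
  qed
  have PW0: "PWidth Aset \<ge> 0" by (rule PWidth_nonneg[OF finA])
  have goal: "ereal mu * (PWidth Aset)\<^sup>2 \<le> mu_tilde_f Aset f gf"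
    unfolding mu_tilde_f_def D_def[symmetric]
  proof (rule INF_greatest)
    fix x assume "x \<in> D - Xstar f D"
    then have xD: "x \<in> D" and xnX: "x \<notin> Xstar f D" by auto
    have fx: "f x0 < f x" using xnX xD x0 unfolding Xstar_def by force
    obtain xs where xs: "xs \<in> Xstar f D" "infdist x (Xstar f D) = dist x xs"
      using infdist_attains_inf[OF clX] x0X by blast
    have xsP: "xs \<in> P" using xs XS by auto
    then have xsD: "xs \<in> D" and Axs: "A *v xs = tS" and bxs: "inner b xs = sS"
      using Dc unfolding P_def by auto
    have fxs: "f xs = f x0" unfolding f_def using Axs bxs by (simp add: tS_def sS_def f_def)
    have "infdist x P \<le> \<theta> * norm (A *v x - tS, inner b x - sS)"
      unfolding P_def by (rule hoffman) (use x0X XS xD Dc in \<open>auto simp: P_def\<close>)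
    then have hd: "dist x xs \<le> \<theta> * norm (A *v x - tS, inner b x - sS)" using xs XS by simp
    define e where "e = xs - x"
    define ne where "ne = norm e"
    define u where "u = norm (A *v x - tS)"
    define \<beta> where "\<beta> = inner b x - sS"
    define \<Delta> where "\<Delta> = f x - f x0"
    have ne_eq: "ne = dist x xs" unfolding ne_def e_def by (simp add: dist_norm norm_minus_commute)
    have ne0: "ne > 0" using xs(1) xnX unfolding ne_eq by auto
    have Delta0: "\<Delta> > 0" using fx \<Delta>_def by simp
    have ne2: "ne\<^sup>2 \<le> \<theta>\<^sup>2 * (u\<^sup>2 + \<beta>\<^sup>2)"
    proof -
      have "ne\<^sup>2 \<le> (\<theta> * norm (A *v x - tS, inner b x - sS))\<^sup>2"
        using hd ne_eq ne0 by (intro power_mono) auto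
      also have "\<dots> = \<theta>\<^sup>2 * (u\<^sup>2 + \<beta>\<^sup>2)"
        unfolding norm_Pair u_def \<beta>_def by (simp add: power_mult_distrib)
      finally show ?thesis .
    qed
    have gx: "f x + inner (gf x) (xs - x) + \<mu>g / 2 * (norm (A *v xs - A *v x))\<^sup>2 \<le> f xs"
      by (rule gradf[OF xD xsD])
    have nu: "norm (A *v xs - A *v x) = u" unfolding u_def Axs by (simp add: norm_minus_commute)
    define a where "a = inner (- gf x) (xs - x)"
    have a_ge: "a \<ge> \<Delta> + \<mu>g / 2 * u\<^sup>2" using gx fxs nu unfolding a_def \<Delta>_def by simp
    have u0: "0 \<le> u" unfolding u_def by simp
    have a0: "a > 0" using a_ge Delta0 mug_pos u0 by (smt (verit) zero_le_power2 divide_pos_pos mult_nonneg_nonneg)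
    define V where "V = f xs - f x - 2 * inner (gf x) (xs - x)"
    have V_ge: "V \<ge> \<Delta> + \<mu>g * u\<^sup>2" using a_ge unfolding V_def a_def \<Delta>_def fxs by simp
    have g1: "g (A *v x) - g (A *v xs) \<le> G * u"
      using gbd[OF xsD xD] unfolding u_def Axs by (simp add: norm_minus_commute)
    have g2: "g (A *v xs) - g (A *v x) \<le> G * u"
      using gbd[OF xD xsD] unfolding u_def Axs by simp
    have bet: "\<beta> = inner b (x - xs)" unfolding \<beta>_def using bxs by (simp add: inner_diff_right)
    have Dsplit: "\<Delta> = (g (A *v x) - g (A *v xs)) + \<beta>"
      using fxs unfolding \<Delta>_def bet f_def by (simp add: inner_diff_right)
    have M1: "norm (x - xs) \<le> M" unfolding M_def using diameter_bounded_bound[OF bD xD xsD] by (simp add: dist_norm)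
    have MA1: "u \<le> MA" unfolding MA_def u_def tS_def
      using diameter_bounded_bound[OF bAD[unfolded AD_def] imageI[OF xD] imageI[OF x0(1)]] by (simp add: dist_norm)
    have bb: "\<bar>\<beta>\<bar> \<le> norm b * M"
    proof -
      have "\<bar>\<beta>\<bar> \<le> norm b * norm (x - xs)" unfolding bet by (rule Cauchy_Schwarz_ineq2)
      also have "\<dots> \<le> norm b * M" using M1 by (intro mult_left_mono) auto
      finally show ?thesis .
    qed
    have GuMA: "G * u \<le> G * MA" using MA1 G0 by (intro mult_left_mono) auto
    have c1: "\<bar>\<beta>\<bar> \<le> \<Delta> + G * u" using Dsplit g1 g2 Delta0 by linarith
    have c2: "\<Delta> \<le> norm b * M + G * MA" using Dsplit g1 bb GuMA by linarith
    have core: "u\<^sup>2 + \<beta>\<^sup>2 \<le> Kc * (\<Delta> + \<mu>g * u\<^sup>2)"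
      unfolding Kc_def
      by (rule core_ineq[OF c1 c2 MA1 u0 Delta0 G0 mug_pos]) (use M0 in simp)
    have "Kc * (\<Delta> + \<mu>g * u\<^sup>2) \<le> Kc * V" using V_ge Kc0 by (intro mult_left_mono) auto
    with core ne2 have ne2': "ne\<^sup>2 \<le> \<theta>\<^sup>2 * (Kc * V)"
      by (smt (verit) mult_left_mono zero_le_power2)
    have V0: "V > 0" using V_ge Delta0 mug_pos by (smt (verit) zero_le_power2 mult_nonneg_nonneg)
    have xh: "x \<in> convex hull Aset" using xD D_def by simp
    have xsh: "xs \<in> convex hull Aset" using xsD D_def by simp
    have SxN: "Sx Aset x \<noteq> {}" by (rule Sx_nonempty[OF finA xh])
    have finV: "finite (v_S gf x ` Sx Aset x)" using Sx_finite[OF finA] by simp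
    have neV: "v_S gf x ` Sx Aset x \<noteq> {}" using SxN by simp
    have "v_f Aset gf x \<in> v_S gf x ` Sx Aset x"
      unfolding v_f_def by (rule arg_min_if_finite(1)[OF finV neV])
    then obtain S0 where S0: "S0 \<in> Sx Aset x" and vfS: "v_f Aset gf x = v_S gf x S0" by blast
    have S0p: "S0 \<noteq> {}" "finite S0" using Sx_elem[OF S0] by auto
    have vS: "v_S gf x S0 \<in> S0 \<and> (\<forall>y\<in>S0. inner (gf x) y \<le> inner (gf x) (v_S gf x S0))"
      unfolding v_S_def by (rule arg_max_fin[OF S0p(2) S0p(1)])
    have sfmin: "inner (gf x) (s_f Aset gf x) \<le> inner (gf x) s" if "s \<in> Aset" for s
      unfolding s_f_def by (rule arg_min_least[OF finA neA that])
    have pos: "inner (- gf x) (xs - x) > 0" using a0 a_def by simp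
    obtain q s v where qsv: "PWidth Aset \<le> ereal q" "s \<in> Aset" "v \<in> S0"
      "q * inner (- gf x) (xs - x) \<le> norm (xs - x) * inner (- gf x) (s - v)"
      using key_pw[OF finA xh S0 xsh pos] by blast
    define dd where "dd = inner (- gf x) (s_f Aset gf x - v_f Aset gf x)"
    have sv_dd: "inner (- gf x) (s - v) \<le> dd"
    proof -
      have "inner (gf x) v \<le> inner (gf x) (v_S gf x S0)" using vS qsv(3) by blast
      then show ?thesis using sfmin[OF qsv(2)] unfolding dd_def vfS by (simp add: inner_diff_right)
    qed
    obtain p where p: "PWidth Aset = ereal p" "0 \<le> p" "p \<le> q"
      using PW0 qsv(1) by (cases "PWidth Aset") auto
    have pa: "p * a \<le> ne * dd"
    proof -
      have "p * a \<le> q * a" using p a0 by (intro mult_right_mono) auto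
      also have "\<dots> \<le> ne * inner (- gf x) (s - v)" using qsv(4) unfolding a_def ne_def e_def .
      also have "\<dots> \<le> ne * dd" using sv_dd ne0 by (intro mult_left_mono) auto
      finally show ?thesis .
    qed
    have pa0: "0 \<le> p * a" using p a0 by simp
    have "0 \<le> ne * dd" using pa pa0 by linarith
    then have dd0: "0 \<le> dd" using ne0 by (simp add: zero_le_mult_iff)
    have "(p * a)\<^sup>2 \<le> (ne * dd)\<^sup>2" using pa pa0 by (intro power_mono) auto
    also have "\<dots> = ne\<^sup>2 * dd\<^sup>2" by (simp add: power_mult_distrib)
    also have "\<dots> \<le> (\<theta>\<^sup>2 * (Kc * V)) * dd\<^sup>2" using ne2' by (intro mult_right_mono) auto
    finally have key2: "p\<^sup>2 * a\<^sup>2 \<le> (\<theta>\<^sup>2 * Kc) * (V * dd\<^sup>2)" by (simp add: power_mult_distrib algebra_simps)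
    have gam: "gammaA Aset gf x xs = a / dd" unfolding gammaA_def a_def dd_def ..
    have inv: "1 / (2 * (gammaA Aset gf x xs)\<^sup>2) = dd\<^sup>2 / (2 * a\<^sup>2)"
      unfolding gam by (simp add: power_divide)
    have th0: "\<theta>\<^sup>2 > 0" using theta_pos by simp
    have val: "mu * p\<^sup>2 \<le> 1 / (2 * (gammaA Aset gf x xs)\<^sup>2) * V"
    proof -
      have a2: "a\<^sup>2 > 0" using a0 by simp
      have den: "2 * \<theta>\<^sup>2 * Kc > 0" using th0 Kc0 by simp
      have step: "p\<^sup>2 \<le> (\<theta>\<^sup>2 * Kc) * (V * dd\<^sup>2) / a\<^sup>2" using key2 a2 by (simp add: pos_le_divide_eq)
      have "mu * p\<^sup>2 = p\<^sup>2 / (2 * \<theta>\<^sup>2 * Kc)" unfolding mu_def by simp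
      also have "\<dots> \<le> ((\<theta>\<^sup>2 * Kc) * (V * dd\<^sup>2) / a\<^sup>2) / (2 * \<theta>\<^sup>2 * Kc)"
        using step den by (intro divide_right_mono) auto
      also have "\<dots> = dd\<^sup>2 / (2 * a\<^sup>2) * V"
      proof -
        have "\<theta>\<^sup>2 * Kc \<noteq> 0" using th0 Kc0 by simp
        then show ?thesis by (simp add: divide_divide_eq_left mult.commute mult.left_commute)
      qed
      finally show ?thesis unfolding inv .
    qed
    have xs_in: "xs \<in> {xs \<in> Xstar f D. inner (gf x) (xs - x) < 0}" using xs(1) pos by simp
    have "ereal mu * (PWidth Aset)\<^sup>2 = ereal (mu * p\<^sup>2)" unfolding p(1) by (simp add: power2_eq_square)
    also have "\<dots> \<le> ereal (1 / (2 * (gammaA Aset gf x xs)\<^sup>2) * (f xs - f x - 2 * inner (gf x) (xs - x)))"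
      using val unfolding V_def by simp
    also have "\<dots> \<le> (SUP xs\<in>{xs \<in> Xstar f D. inner (gf x) (xs - x) < 0}.
          ereal (1 / (2 * (gammaA Aset gf x xs)\<^sup>2) * (f xs - f x - 2 * inner (gf x) (xs - x))))"
      by (rule SUP_upper[OF xs_in])
    finally show "ereal mu * (PWidth Aset)\<^sup>2 \<le> (SUP xs\<in>{xs \<in> Xstar f D. inner (gf x) (xs - x) < 0}.
          ereal (1 / (2 * (gammaA Aset gf x xs)\<^sup>2) * (f xs - f x - 2 * inner (gf x) (xs - x))))" .
  qed
  show ?thesis unfolding Let_def
    using goal unfolding mu_def Kc_def G_def M_def MA_def D_def f_def gf_def by simp
qed

end
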